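(* In any execution of Algorithm $\gamma$n-Burst, within any time interval $I^-$ during which at all times at least $n^2$ tasks of cost $\ell_{\min}$ are pending in $\gamma$n-Burst, each $\ell_{\min}$-task has at most one absolute task execution fully contained in $I^-$ (all such absolute task executions appear exactly once).
   Context: Model: $n$ processors with ids $1,\dots,n$ and a shared repository; tasks with ids, arrival times and costs $\ell_{\min}$ or $\ell_{\max}$ ($0<\ell_{\min}<\ell_{\max}$) are injected over time; processors may crash and restart (restarted processors remember only the algorithm and $n$). A task is pending if injected and its completion not yet reported; once reported it is immediately removed. A processor repeatedly obtains the pending set, chooses a task, executes it (a task of cost $\ell$ takes time $\ell/s$ with speedup $s>1$) and reports it; execution is non-preemptive and a crash loses progress. An absolute task execution of $\tau$ is an interval $[t,t']$ in which a processor schedules $\tau$ at $t$ and reports it at $t'$ without stopping in $[t,t')$. Algorithm $\gamma$n-Burst for processor $p$, with $\gamma=\lceil\frac{\ell_{\max}-s\ell_{\min}}{(s-1)\ell_{\min}}\rceil$: counter $c$ set to $0$ on (re)start; each cycle it forms lists $L_{\min},L_{\max}$ of pending tasks of cost $\ell_{\min},\ell_{\max}$ sorted by arrival. Case 1 (both lists $<n^2$): if previous task had cost $\ell_{\min}$, perform task at position $(pn)\bmod|L_{\max}|$ of $L_{\max}$, $c\gets0$; else task at position $(pn)\bmod|L_{\min}|$ of $L_{\min}$, $c\gets\min(c+1,\gamma)$. Case 2 ($|L_{\min}|\ge n^2>|L_{\max}|$): position $pn$ of $L_{\min}$, $c\gets\min(c+1,\gamma)$. Case 3 ($|L_{\max}|\ge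 n^2>|L_{\min}|$): position $pn$ of $L_{\max}$, $c\gets0$. Case 4 (both $\ge n^2$): if $c=\gamma$, position $pn$ of $L_{\max}$, $c\gets0$; else position $pn$ of $L_{\min}$, $c\gets\min(c+1,\gamma)$. Then report the task. *)

theory Defs
  imports Complex_Main "HOL-Library.Product_Lexorder"
begin

record task_env =
  inj  :: "nat set"
  arr  :: "nat \<Rightarrow> real"
  cost :: "nat \<Rightarrow> real"

text \<open>An execution: for every processor p a (finite or infinite, downward closed)
  set of cycle indices K p.  Cycle k of processor p obtains the pending set and
  schedules task tk p k at time st p k; cnew p k is the counter value after the
  choice; dn p k says whether the task was executed without stopping and reported
  (at time st p k + cost/s); rs p k = Some r says that the processor (re)started at
  time r before cycle k (state reset).\<close>
record exec =
  K    :: "nat \<Rightarrow> nat set"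
  st   :: "nat \<Rightarrow> nat \<Rightarrow> real"
  tk   :: "nat \<Rightarrow> nat \<Rightarrow> nat"
  cnew :: "nat \<Rightarrow> nat \<Rightarrow> int"
  dn   :: "nat \<Rightarrow> nat \<Rightarrow> bool"
  rs   :: "nat \<Rightarrow> nat \<Rightarrow> real option"

definition gamma :: "real \<Rightarrow> real \<Rightarrow> real \<Rightarrow> int" where
  "gamma s lmin lmax = \<lceil>(lmax - s * lmin) / ((s - 1) * lmin)\<rceil>"

definition end_time :: "real \<Rightarrow> task_env \<Rightarrow> exec \<Rightarrow> nat \<Rightarrow> nat \<Rightarrow> real" where
  "end_time s T E p k = st E p k + cost T (tk E p k) / s"

definition reported :: "nat \<Rightarrow> real \<Rightarrow> task_env \<Rightarrow> exec \<Rightarrow> nat \<Rightarrow> real \<Rightarrow> bool" where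
  "reported n s T E \<tau> t \<longleftrightarrow>
     (\<exists>p k. p \<in> {1..n} \<and> k \<in> K E p \<and> dn E p k \<and> tk E p k = \<tau> \<and> end_time s T E p k = t)"

definition pending :: "nat \<Rightarrow> real \<Rightarrow> task_env \<Rightarrow> exec \<Rightarrow> real \<Rightarrow> nat set" where
  "pending n s T E t =
     {\<tau> \<in> inj T. arr T \<tau> \<le> t \<and> \<not> (\<exists>t'\<le>t. reported n s T E \<tau> t')}"

definition sorted_by_arrival :: "(nat \<Rightarrow> real) \<Rightarrow> nat set \<Rightarrow> nat list" where
  "sorted_by_arrival a A = map snd (sorted_list_of_set ((\<lambda>\<tau>. (a \<tau>, \<tau>)) ` A))"

definition Lmin_list :: "nat \<Rightarrow> real \<Rightarrow> real \<Rightarrow> task_env \<Rightarrow> exec \<Rightarrow> real \<Rightarrow> nat list" where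
  "Lmin_list n s lmin T E t =
     sorted_by_arrival (arr T) {\<tau> \<in> pending n s T E t. cost T \<tau> = lmin}"

definition Lmax_list :: "nat \<Rightarrow> real \<Rightarrow> real \<Rightarrow> task_env \<Rightarrow> exec \<Rightarrow> real \<Rightarrow> nat list" where
  "Lmax_list n s lmax T E t =
     sorted_by_arrival (arr T) {\<tau> \<in> pending n s T E t. cost T \<tau> = lmax}"

text \<open>One decision of gamma n-Burst for processor p with counter c; prevmin says whether
  the previous task had cost lmin.  List positions: in Case 1
  the 0-based index (p n) mod |L|; in Cases 2--4 "position p n" is the (p n)-th
  element, i.e. 0-based index p n - 1.\<close>
definition burst_choice ::
  "nat \<Rightarrow> int \<Rightarrow> nat \<Rightarrow> int \<Rightarrow> bool \<Rightarrow> nat list \<Rightarrow> nat list \<Rightarrow> (nat \<times> int) option" where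
  "burst_choice n \<gamma> p c prevmin Lmn Lmx =
    (if length Lmn < n^2 \<and> length Lmx < n^2 then
       (if prevmin then
          (if Lmx = [] then None else Some (Lmx ! ((p * n) mod length Lmx), 0))
        else
          (if Lmn = [] then None else Some (Lmn ! ((p * n) mod length Lmn), min (c + 1) \<gamma>)))
     else if n^2 \<le> length Lmn \<and> length Lmx < n^2 then Some (Lmn ! (p * n - 1), min (c + 1) \<gamma>)
     else if n^2 \<le> length Lmx \<and> length Lmn < n^2 then Some (Lmx ! (p * n - 1), 0)
     else if c = \<gamma> then Some (Lmx ! (p * n - 1), 0)
     else Some (Lmn ! (p * n - 1), min (c + 1) \<gamma>))"

definition choice_at ::
  "nat \<Rightarrow> real \<Rightarrow> real \<Rightarrow> real \<Rightarrow> task_env \<Rightarrow> exec \<Rightarrow> nat \<Rightarrow> int \<Rightarrow> bool \<Rightarrow> real \<Rightarrow> (nat \<times> int) option" where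
  "choice_at n s lmin lmax T E p c pm t =
     burst_choice n (gamma s lmin lmax) p c pm (Lmin_list n s lmin T E t) (Lmax_list n s lmax T E t)"

definition c_before :: "exec \<Rightarrow> nat \<Rightarrow> nat \<Rightarrow> int" where
  "c_before E p k = (if rs E p k \<noteq> None then 0 else cnew E p (k - 1))"

definition prev_min :: "real \<Rightarrow> task_env \<Rightarrow> exec \<Rightarrow> nat \<Rightarrow> nat \<Rightarrow> bool" where
  "prev_min lmin T E p k \<longleftrightarrow> rs E p k = None \<and> cost T (tk E p (k - 1)) = lmin"

definition wait_start :: "real \<Rightarrow> task_env \<Rightarrow> exec \<Rightarrow> nat \<Rightarrow> nat \<Rightarrow> real" where
  "wait_start s T E p k = (case rs E p k of Some r \<Rightarrow> r | None \<Rightarrow> end_time s T E p (k - 1))"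

definition valid_exec :: "nat \<Rightarrow> real \<Rightarrow> real \<Rightarrow> real \<Rightarrow> task_env \<Rightarrow> exec \<Rightarrow> bool" where
  "valid_exec n s lmin lmax T E \<longleftrightarrow>
    (\<forall>p. p \<notin> {1..n} \<longrightarrow> K E p = {}) \<and>
    (\<forall>p\<in>{1..n}.
       (\<forall>k\<in>K E p. \<forall>j<k. j \<in> K E p) \<and>
       (0 \<in> K E p \<longrightarrow> rs E p 0 \<noteq> None) \<and>
       (\<forall>k. Suc k \<in> K E p \<longrightarrow>
          (if dn E p k
           then (\<forall>r. rs E p (Suc k) = Some r \<longrightarrow> r > end_time s T E p k)
           else (\<exists>r. rs E p (Suc k) = Some r \<and> r > st E p k))) \<and>
       (\<forall>k\<in>K E p.
          wait_start s T E p k \<le> st E p k \<and>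
          (\<forall>t. wait_start s T E p k \<le> t \<and> t < st E p k \<longrightarrow>
               choice_at n s lmin lmax T E p (c_before E p k) (prev_min lmin T E p k) t = None) \<and>
          choice_at n s lmin lmax T E p (c_before E p k) (prev_min lmin T E p k) (st E p k)
            = Some (tk E p k, cnew E p k)))"

definition abs_exec_in :: "nat \<Rightarrow> real \<Rightarrow> task_env \<Rightarrow> exec \<Rightarrow> real set \<Rightarrow> nat \<Rightarrow> nat \<Rightarrow> nat \<Rightarrow> bool" where
  "abs_exec_in n s T E I \<tau> p k \<longleftrightarrow>
     p \<in> {1..n} \<and> k \<in> K E p \<and> dn E p k \<and> tk E p k = \<tau> \<and>
     {st E p k .. end_time s T E p k} \<subseteq> I"

end

theory Submission
  imports Defs
begin

lemma take_set_less:
  fixes xs :: "('a::linorder) list"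
  assumes "sorted_wrt (<) xs" "i < length xs"
  shows "{y\<in>set xs. y < xs!i} = set (take i xs)"
proof
  show "{y\<in>set xs. y < xs!i} \<subseteq> set (take i xs)"
  proof
    fix y assume "y \<in> {y\<in>set xs. y < xs!i}"
    then obtain j where j: "j < length xs" "y = xs!j" "xs!j < xs!i" by (auto simp: in_set_conv_nth)
    have "j < i"
    proof (rule ccontr)
      assume "\<not> j < i"
      then have "i \<le> j" by simp
      then have "xs!i \<le> xs!j" using assms j
        by (metis dual_order.order_iff_strict sorted_wrt_nth_less)
      then show False using j by simp
    qed
    then show "y \<in> set (take i xs)" using j by (auto simp: in_set_conv_nth)
  qed
next
  show "set (take i xs) \<subseteq> {y\<in>set xs. y < xs!i}"
  proof
    fix y assume "y \<in> set (take i xs)"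
    then obtain m where m: "m < i" "y = xs!m" by (auto simp: in_set_conv_nth)
    then show "y \<in> {y\<in>set xs. y < xs!i}" using assms by (auto simp: sorted_wrt_iff_nth_less)
  qed
qed

lemma sba_set: "finite S \<Longrightarrow> set (sorted_by_arrival a S) = S"
  unfolding sorted_by_arrival_def by (auto simp: image_image)

lemma sba_len: "finite S \<Longrightarrow> length (sorted_by_arrival a S) = card S"
  unfolding sorted_by_arrival_def by (simp add: card_image inj_on_def)

lemma sba_idx:
  assumes "finite S" "i < length (sorted_by_arrival a S)"
  shows "card {\<sigma>\<in>S. (a \<sigma>, \<sigma>) < (a (sorted_by_arrival a S ! i), sorted_by_arrival a S ! i)} = i"
proof -
  define f where "f = (\<lambda>\<tau>. (a \<tau>, \<tau>))"
  define xs where "xs = sorted_list_of_set (f ` S)"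
  have L: "sorted_by_arrival a S = map snd xs" unfolding xs_def f_def sorted_by_arrival_def by simp
  have sw: "sorted_wrt (<) xs" unfolding xs_def by simp
  have il: "i < length xs" using assms(2) L by simp
  have dx: "distinct xs" unfolding xs_def by simp
  have "xs!i \<in> f ` S" using il assms(1) unfolding xs_def by (metis nth_mem set_sorted_list_of_set finite_imageI)
  then obtain y where y: "y \<in> S" "xs!i = f y" by auto
  have x: "sorted_by_arrival a S ! i = y" using L il y by (simp add: f_def)
  have "{\<sigma>\<in>S. f \<sigma> < f y} = f -` {z\<in>set xs. z < xs!i} \<inter> S"
    using y assms(1) unfolding xs_def by auto
  have "f ` {\<sigma>\<in>S. f \<sigma> < f y} = {z\<in>set xs. z < xs!i}"
    using y assms(1) unfolding xs_def by auto
  moreover have "inj_on f {\<sigma>\<in>S. f \<sigma> < f y}" unfolding f_def inj_on_def by auto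
  ultimately have "card {\<sigma>\<in>S. f \<sigma> < f y} = card {z\<in>set xs. z < xs!i}"
    by (metis card_image)
  also have "\<dots> = i" using take_set_less[OF sw il] dx il
    by (simp add: distinct_card)
  finally show ?thesis using x by (simp add: f_def)
qed

lemma bc_mem:
  assumes "burst_choice n g p c pm Lmn Lmx = Some (x, c')" "1 \<le> p" "p \<le> n"
  shows "x \<in> set Lmn \<or> x \<in> set Lmx"
proof -
  have pn: "p * n - 1 < n^2" using assms(2,3)
    by (metis One_nat_def Suc_le_eq diff_less less_le_trans mult_le_mono1 mult_pos_pos power2_eq_square zero_less_one)
  show ?thesis using assms(1) pn unfolding burst_choice_def
    by (auto split: if_splits simp: nth_mem)
qed

lemma bc_min:
  assumes "burst_choice n g p c pm Lmn Lmx = Some (x, c')" "1 \<le> p" "p \<le> n"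
    "n^2 \<le> length Lmn" "x \<notin> set Lmx"
  shows "x = Lmn ! (p * n - 1) \<and> p * n - 1 < length Lmn"
proof -
  have pn: "p * n - 1 < n^2" using assms(2,3)
    by (metis One_nat_def Suc_le_eq diff_less less_le_trans mult_le_mono1 mult_pos_pos power2_eq_square zero_less_one)
  show ?thesis using assms(1,4,5) pn unfolding burst_choice_def
    by (auto split: if_splits simp: nth_mem)
qed

lemma nat_aux1: "(a::nat) - 1 \<le> b - 1 + (c - 1) \<Longrightarrow> 1 \<le> a \<Longrightarrow> 1 \<le> b \<Longrightarrow> 1 \<le> c \<Longrightarrow> a < b + c" by arith
lemma nat_aux2: "(b::nat) - 1 \<le> a - 1 \<Longrightarrow> 1 \<le> b \<Longrightarrow> 1 \<le> a \<Longrightarrow> b \<le> a" by arith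

lemma pend_fin:
  assumes "\<forall>t. finite {\<tau> \<in> inj T. arr T \<tau> \<le> t}"
  shows "finite (pending n s T E t)"
  by (rule finite_subset[OF _ assms[rule_format, of t]]) (auto simp: pending_def)

lemma tk_pend:
  assumes fin: "\<forall>t. finite {\<tau> \<in> inj T. arr T \<tau> \<le> t}"
    and V: "valid_exec n s lmin lmax T E" and p: "p \<in> {1..n}" and k: "k \<in> K E p"
  shows "tk E p k \<in> pending n s T E (st E p k)"
proof -
  have ch: "choice_at n s lmin lmax T E p (c_before E p k) (prev_min lmin T E p k) (st E p k)
            = Some (tk E p k, cnew E p k)"
    using V p k unfolding valid_exec_def by blast
  have f: "finite (pending n s T E (st E p k))" using pend_fin[OF fin] .
  from bc_mem[OF ch[unfolded choice_at_def]] p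
  show ?thesis using f unfolding Lmin_list_def Lmax_list_def
    by (auto simp: sba_set)
qed

lemma tk_cost:
  assumes fin: "\<forall>t. finite {\<tau> \<in> inj T. arr T \<tau> \<le> t}"
    and V: "valid_exec n s lmin lmax T E" and p: "p \<in> {1..n}" and k: "k \<in> K E p"
    and c: "\<forall>\<tau>\<in>inj T. cost T \<tau> = lmin \<or> cost T \<tau> = lmax" and l: "lmin < lmax"
  shows "lmin \<le> cost T (tk E p k)"
  using tk_pend[OF fin V p k] c l by (auto simp: pending_def)

lemma end_ge:
  assumes fin: "\<forall>t. finite {\<tau> \<in> inj T. arr T \<tau> \<le> t}"
    and V: "valid_exec n s lmin lmax T E" and p: "p \<in> {1..n}" and k: "k \<in> K E p"
    and c: "\<forall>\<tau>\<in>inj T. cost T \<tau> = lmin \<or> cost T \<tau> = lmax" and l: "lmin < lmax"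
    and s: "s > 1" and lm: "0 < lmin"
  shows "st E p k + lmin / s \<le> end_time s T E p k"
  using tk_cost[OF fin V p k c l] s unfolding end_time_def
  by (simp add: divide_right_mono)

lemma st_step:
  assumes fin: "\<forall>t. finite {\<tau> \<in> inj T. arr T \<tau> \<le> t}"
    and V: "valid_exec n s lmin lmax T E" and p: "p \<in> {1..n}" and k: "Suc k \<in> K E p"
    and c: "\<forall>\<tau>\<in>inj T. cost T \<tau> = lmin \<or> cost T \<tau> = lmax" and l: "lmin < lmax"
    and s: "s > 1" and lm: "0 < lmin"
  shows "st E p k < st E p (Suc k) \<and> (dn E p k \<longrightarrow> end_time s T E p k \<le> st E p (Suc k))"
proof -
  have k0: "k \<in> K E p" using V p k unfolding valid_exec_def by blast
  have e: "st E p k + lmin / s \<le> end_time s T E p k" by (rule end_ge[OF fin V p k0 c l s lm])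
  have ls: "0 < lmin / s" using lm s by simp
  have w: "wait_start s T E p (Suc k) \<le> st E p (Suc k)" using V p k unfolding valid_exec_def by blast
  have r: "if dn E p k
           then (\<forall>r. rs E p (Suc k) = Some r \<longrightarrow> r > end_time s T E p k)
           else (\<exists>r. rs E p (Suc k) = Some r \<and> r > st E p k)"
    using V p k unfolding valid_exec_def by blast
  show ?thesis
  proof (cases "rs E p (Suc k)")
    case None
    then have "dn E p k" using r by (auto split: if_splits)
    then show ?thesis using None w e ls by (auto simp: wait_start_def)
  next
    case (Some x)
    then show ?thesis using r w e ls by (auto simp: wait_start_def split: if_splits)
  qed
qed

lemma st_after:
  assumes fin: "\<forall>t. finite {\<tau> \<in> inj T. arr T \<tau> \<le> t}"
    and V: "valid_exec n s lmin lmax T E" and p: "p \<in> {1..n}"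
    and c: "\<forall>\<tau>\<in>inj T. cost T \<tau> = lmin \<or> cost T \<tau> = lmax" and l: "lmin < lmax"
    and s: "s > 1" and lm: "0 < lmin"
  shows "m \<in> K E p \<Longrightarrow> k < m \<Longrightarrow> dn E p k \<Longrightarrow> end_time s T E p k \<le> st E p m"
proof (induction m)
  case 0
  then show ?case by simp
next
  case (Suc m)
  note stp = st_step[OF fin V p Suc.prems(1) c l s lm]
  show ?case
  proof (cases "k = m")
    case True
    then show ?thesis using stp Suc.prems by simp
  next
    case False
    then have "k < m" using Suc.prems by simp
    moreover have "m \<in> K E p" using V p Suc.prems(1) unfolding valid_exec_def by blast
    ultimately have "end_time s T E p k \<le> st E p m" using Suc.IH Suc.prems by simp
    then show ?thesis using stp by simp
  qed
qed
theorem lemma12: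
  fixes n :: nat and s lmin lmax :: real and T :: task_env and E :: exec and I :: "real set"
  assumes "n \<ge> 1" and "s > 1" and "0 < lmin" and "lmin < lmax"
    and "\<forall>\<tau>\<in>inj T. cost T \<tau> = lmin \<or> cost T \<tau> = lmax"
    and "\<forall>t. finite {\<tau> \<in> inj T. arr T \<tau> \<le> t}"
    and "valid_exec n s lmin lmax T E"
    and "\<forall>x\<in>I. \<forall>z\<in>I. \<forall>y. x \<le> y \<and> y \<le> z \<longrightarrow> y \<in> I"
    and "\<forall>t\<in>I. card {\<tau> \<in> pending n s T E t. cost T \<tau> = lmin} \<ge> n^2"
  shows "\<forall>\<tau>\<in>inj T. cost T \<tau> = lmin \<longrightarrow>
           (\<forall>p k q j. abs_exec_in n s T E I \<tau> p k \<and> abs_exec_in n s T E I \<tau> q j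
                      \<longrightarrow> (p, k) = (q, j))"
proof (intro ballI impI allI)
  fix \<tau> p k q j
  assume \<tau>: "\<tau> \<in> inj T" "cost T \<tau> = lmin"
  assume A: "abs_exec_in n s T E I \<tau> p k \<and> abs_exec_in n s T E I \<tau> q j"
  note n1 = assms(1) and s1 = assms(2) and lm = assms(3) and ll = assms(4) and cst = assms(5)
    and fin = assms(6) and V = assms(7) and big = assms(9)
  define S where "S t = {\<sigma> \<in> pending n s T E t. cost T \<sigma> = lmin}" for t
  have finS: "finite (S t)" for t unfolding S_def using pend_fin[OF fin] by simp
  have ls: "0 < lmin / s" using lm s1 by simp
  have key: "(p, k) = (q, j)"
    if a1: "abs_exec_in n s T E I \<tau> p k" and a2: "abs_exec_in n s T E I \<tau> q j"
      and le: "st E p k \<le> st E q j" for p k q j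
  proof -
    have p: "p \<in> {1..n}" "k \<in> K E p" "dn E p k" "tk E p k = \<tau>"
      "{st E p k .. end_time s T E p k} \<subseteq> I" using a1 unfolding abs_exec_in_def by auto
    have q: "q \<in> {1..n}" "j \<in> K E q" "dn E q j" "tk E q j = \<tau>"
      "{st E q j .. end_time s T E q j} \<subseteq> I" using a2 unfolding abs_exec_in_def by auto
    define t1 where "t1 = st E p k"
    define t2 where "t2 = st E q j"
    define e1 where "e1 = end_time s T E p k"
    have e1: "e1 = t1 + lmin / s" unfolding e1_def t1_def end_time_def using p(4) \<tau>(2) by simp
    have eq: "st E q j + lmin / s \<le> end_time s T E q j" by (rule end_ge[OF fin V q(1,2) cst ll s1 lm])
    have t1I: "t1 \<in> I" using p(5) e1 ls unfolding t1_def e1_def by auto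
    have t2I: "t2 \<in> I" using q(5) eq ls unfolding t2_def by auto
    have rep1: "reported n s T E \<tau> e1" unfolding reported_def e1_def using p by blast
    have pend2: "\<tau> \<in> pending n s T E t2" using tk_pend[OF fin V q(1,2)] q(4) unfolding t2_def by simp
    have pend1: "\<tau> \<in> pending n s T E t1" using tk_pend[OF fin V p(1,2)] p(4) unfolding t1_def by simp
    have t2e1: "t2 < e1"
    proof (rule ccontr)
      assume "\<not> t2 < e1"
      then have "e1 \<le> t2" by simp
      then show False using pend2 rep1 unfolding pending_def by blast
    qed
    have idx: "card {\<sigma>\<in>S (st E r m). (arr T \<sigma>, \<sigma>) < (arr T \<tau>, \<tau>)} = r * n - 1"
      if r: "r \<in> {1..n}" "m \<in> K E r" "tk E r m = \<tau>" "st E r m \<in> I" for r m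
    proof -
      let ?t = "st E r m"
      have ch: "choice_at n s lmin lmax T E r (c_before E r m) (prev_min lmin T E r m) ?t
            = Some (tk E r m, cnew E r m)"
        using V r(1,2) unfolding valid_exec_def by blast
      have len: "n^2 \<le> length (Lmin_list n s lmin T E ?t)"
        using big r(4) finS unfolding Lmin_list_def S_def by (simp add: sba_len)
      have nx: "\<tau> \<notin> set (Lmax_list n s lmax T E ?t)"
        using pend_fin[OF fin] \<tau>(2) ll unfolding Lmax_list_def by (simp add: sba_set)
      have bm: "\<tau> = Lmin_list n s lmin T E ?t ! (r * n - 1) \<and> r * n - 1 < length (Lmin_list n s lmin T E ?t)"
        using bc_min[OF ch[unfolded choice_at_def] _ _ len] r nx by auto
      show ?thesis using sba_idx[OF finS[of ?t], of "r * n - 1" "arr T"] bm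
        unfolding Lmin_list_def S_def by simp
    qed
    define A where "A = {\<sigma>\<in>S t1. (arr T \<sigma>, \<sigma>) < (arr T \<tau>, \<tau>)}"
    define B where "B = {\<sigma>\<in>S t2. (arr T \<sigma>, \<sigma>) < (arr T \<tau>, \<tau>)}"
    have cA: "card A = p * n - 1" unfolding A_def t1_def using idx[OF p(1,2,4)] t1I t1_def by simp
    have cB: "card B = q * n - 1" unfolding B_def t2_def using idx[OF q(1,2,4)] t2I t2_def by simp
    have finA: "finite A" unfolding A_def using finS by simp
    have arr\<tau>: "arr T \<tau> \<le> t1" using pend1 unfolding pending_def by simp
    have BA: "B \<subseteq> A"
    proof
      fix \<sigma> assume "\<sigma> \<in> B"
      then have b: "\<sigma> \<in> inj T" "\<not> (\<exists>t'\<le>t2. reported n s T E \<sigma> t')" "cost T \<sigma> = lmin"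
        "(arr T \<sigma>, \<sigma>) < (arr T \<tau>, \<tau>)"
        unfolding B_def S_def pending_def by auto
      have "arr T \<sigma> \<le> arr T \<tau>" using b(4) by (auto simp: less_prod_def)
      then show "\<sigma> \<in> A" using b arr\<tau> le unfolding A_def S_def pending_def t1_def t2_def by force
    qed
    define R where "R r = {m. m \<in> K E r \<and> dn E r m \<and> t1 < end_time s T E r m \<and> end_time s T E r m \<le> t2}" for r
    have Runi: "m = m'" if "m \<in> R r" "m' \<in> R r" "r \<in> {1..n}" for r m m'
    proof (rule ccontr)
      assume ne: "m \<noteq> m'"
      have gen: False if "a \<in> R r" "b \<in> R r" "a < b" for a b
      proof -
        have "end_time s T E r a \<le> st E r b"
          using st_after[OF fin V \<open>r \<in> {1..n}\<close> cst ll s1 lm, of b a] that unfolding R_def by auto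
        moreover have "st E r b + lmin / s \<le> end_time s T E r b"
          using end_ge[OF fin V \<open>r \<in> {1..n}\<close> _ cst ll s1 lm, of b] that unfolding R_def by auto
        ultimately show False using that t2e1 e1 unfolding R_def by auto
      qed
      show False using ne gen that by (metis linorder_neqE_nat)
    qed
    have Rp: "R p = {}"
    proof -
      have False if m: "m \<in> R p" for m
      proof -
        have mm: "m \<in> K E p" "dn E p m" "t1 < end_time s T E p m" "end_time s T E p m \<le> t2"
          using m unfolding R_def by auto
        consider "m < k" | "m = k" | "k < m" by arith
        then show False
        proof cases
          case 1 then show ?thesis using st_after[OF fin V p(1) cst ll s1 lm p(2) 1 mm(2)] mm t1_def by simp
        next
          case 2 then show ?thesis using mm t2e1 e1_def by simp
        next
          case 3
          have "e1 \<le> st E p m" using st_after[OF fin V p(1) cst ll s1 lm mm(1) 3 p(3)] e1_def by simp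
          moreover have "st E p m + lmin / s \<le> end_time s T E p m" using end_ge[OF fin V p(1) mm(1) cst ll s1 lm] .
          ultimately show ?thesis using mm t2e1 ls by simp
        qed
      qed
      then show ?thesis by blast
    qed
    define g where "g r = tk E r (SOME m. m \<in> R r)" for r
    have AB: "A - B \<subseteq> g ` ({1..n} - {p})"
    proof
      fix \<sigma> assume \<sigma>: "\<sigma> \<in> A - B"
      then have a: "\<sigma> \<in> inj T" "arr T \<sigma> \<le> t1" "\<not> (\<exists>t'\<le>t1. reported n s T E \<sigma> t')" "cost T \<sigma> = lmin"
        "(arr T \<sigma>, \<sigma>) < (arr T \<tau>, \<tau>)"
        unfolding A_def S_def pending_def by auto
      have "\<sigma> \<notin> pending n s T E t2" using \<sigma> a(4,5) unfolding B_def S_def by auto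
      moreover have "arr T \<sigma> \<le> t2" using a(2) le unfolding t1_def t2_def by simp
      ultimately have "\<exists>t'\<le>t2. reported n s T E \<sigma> t'" using a(1) unfolding pending_def by blast
      then obtain t' where t': "t' \<le> t2" "reported n s T E \<sigma> t'" by blast
      have "t1 < t'"
      proof (rule ccontr)
        assume "\<not> t1 < t'"
        then have "t' \<le> t1" by simp
        then show False using t' a(3) by blast
      qed
      then obtain r m where rm: "r \<in> {1..n}" "m \<in> K E r" "dn E r m" "tk E r m = \<sigma>"
        "end_time s T E r m = t'" using t'(2) unfolding reported_def by blast
      have mR: "m \<in> R r" unfolding R_def using rm t' \<open>t1 < t'\<close> by auto
      have "r \<noteq> p" using mR Rp by auto
      moreover have "(SOME m. m \<in> R r) = m" using Runi[OF _ mR rm(1)] mR by (metis someI)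
      ultimately show "\<sigma> \<in> g ` ({1..n} - {p})" using rm unfolding g_def by force
    qed
    have "card (A - B) \<le> card ({1..n} - {p})"
      using card_mono[OF finite_imageI AB] card_image_le[of "{1..n} - {p}" g] by force
    also have "\<dots> = n - 1" using p(1) by simp
    finally have cAB: "card (A - B) \<le> n - 1" .
    have "card A = card B + card (A - B)" using card_Diff_subset[OF finite_subset[OF BA finA] BA]
      card_mono[OF finA BA] by simp
    then have i1: "p * n - 1 \<le> q * n - 1 + (n - 1)" using cA cB cAB by simp
    have i2: "q * n - 1 \<le> p * n - 1" using card_mono[OF finA BA] cA cB by simp
    have pn1: "1 \<le> p * n" "1 \<le> q * n" using p(1) q(1) n1 by auto
    have "p * n < q * n + n" using nat_aux1[OF i1 pn1] n1 by simp
    then have "p * n < (q + 1) * n" by (simp add: algebra_simps)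
    then have "p \<le> q" by (metis Suc_eq_plus1 less_Suc_eq_le mult_less_cancel2)
    moreover have "q * n \<le> p * n" using nat_aux2[OF i2 pn1(2,1)] .
    then have "q \<le> p" using n1 by simp
    ultimately have pq: "p = q" by simp
    have "k = j"
    proof -
      consider "k < j" | "k = j" | "j < k" by arith
      then show ?thesis
      proof cases
        case 1
        have "e1 \<le> t2" using st_after[OF fin V p(1) cst ll s1 lm, of j k] q(2) pq 1 p(3) e1_def t2_def by simp
        then show ?thesis using t2e1 by simp
      next
        case 3
        have "end_time s T E q j \<le> t1" using st_after[OF fin V q(1) cst ll s1 lm, of k j] p(2) pq 3 q(3) t1_def by simp
        then show ?thesis using eq le t1_def ls by simp
      qed simp
    qed
    then show ?thesis using pq by simp
  qed
  show "(p, k) = (q, j)"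
  proof (cases "st E p k \<le> st E q j")
    case True then show ?thesis using key A by blast
  next
    case False then show ?thesis using key[of q j p k] A by simp
  qed
qed

end
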